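(* Let $m\ge 1$, $n\ge 0$, let $y_1,\dots,y_m$ be distinct integers each less than $-1$, let $x_1,\dots,x_n$ be distinct integers each greater than $1$, and let $D=\{1,y_1,\dots,y_m,x_1,\dots,x_n\}$. Then $diam(D)=diam(D\cup\{0\})$, and $diam(D)=4$ if $m=1$, $diam(D)=5$ if $m=2$, and $diam(D)=6$ if $m>2$.
   Context: A signed tree is a pair $(T,s)$ where $T$ is a finite tree and $s:E(T)\to\{+,-\}$. The signed degree $sdeg(v)$ of a vertex is the number of incident positive edges minus the number of incident negative edges. $(T,s)$ realizes (satisfies) a set $D$ of integers if $D=\{sdeg(v):v\in V(T)\}$. For a set $D$ containing $1$ or $-1$, $diam(D)=\min\{diam(T): \text{some signed tree }(T,s)\text{ realizes }D\}$, where $diam(T)$ is the diameter of the tree $T$. *)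

theory Defs
  imports Main
begin

text \<open>Finite simple graphs with vertices in nat: a vertex set V and an edge set E
  of 2-element subsets of V.  Every finite tree is isomorphic to one on nat vertices.\<close>

definition graph :: "nat set \<Rightarrow> nat set set \<Rightarrow> bool" where
  "graph V E \<longleftrightarrow> finite V \<and> (\<forall>e\<in>E. e \<subseteq> V \<and> card e = 2)"

definition walk :: "nat set set \<Rightarrow> nat list \<Rightarrow> bool" where
  "walk E p \<longleftrightarrow> p \<noteq> [] \<and> (\<forall>i. Suc i < length p \<longrightarrow> {p ! i, p ! Suc i} \<in> E)"

definition connected_graph :: "nat set \<Rightarrow> nat set set \<Rightarrow> bool" where
  "connected_graph V E \<longleftrightarrow>
     (\<forall>u\<in>V. \<forall>v\<in>V. \<exists>p. walk E p \<and> set p \<subseteq> V \<and> hd p = u \<and> last p = v)"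

definition is_cycle :: "nat set set \<Rightarrow> nat list \<Rightarrow> bool" where
  "is_cycle E p \<longleftrightarrow> length p \<ge> 3 \<and> distinct p \<and> walk E p \<and> {last p, hd p} \<in> E"

definition acyclic_graph :: "nat set set \<Rightarrow> bool" where
  "acyclic_graph E \<longleftrightarrow> \<not> (\<exists>p. is_cycle E p)"

definition tree :: "nat set \<Rightarrow> nat set set \<Rightarrow> bool" where
  "tree V E \<longleftrightarrow> V \<noteq> {} \<and> graph V E \<and> connected_graph V E \<and> acyclic_graph E"

definition gdist :: "nat set set \<Rightarrow> nat \<Rightarrow> nat \<Rightarrow> nat" where
  "gdist E u v = (LEAST k. \<exists>p. walk E p \<and> hd p = u \<and> last p = v \<and> length p = Suc k)"

definition tree_diam :: "nat set \<Rightarrow> nat set set \<Rightarrow> nat" where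
  "tree_diam V E = Max {gdist E u v | u v. u \<in> V \<and> v \<in> V}"

text \<open>Signs: s e = True means positive edge, False means negative edge.\<close>
definition sdeg :: "nat set set \<Rightarrow> (nat set \<Rightarrow> bool) \<Rightarrow> nat \<Rightarrow> int" where
  "sdeg E s v = int (card {e\<in>E. v \<in> e \<and> s e}) - int (card {e\<in>E. v \<in> e \<and> \<not> s e})"

definition realizes :: "nat set \<Rightarrow> nat set set \<Rightarrow> (nat set \<Rightarrow> bool) \<Rightarrow> int set \<Rightarrow> bool" where
  "realizes V E s D \<longleftrightarrow> D = sdeg E s ` V"

definition diamD :: "int set \<Rightarrow> nat" where
  "diamD D = (LEAST d. \<exists>V E s. tree V E \<and> realizes V E s D \<and> tree_diam V E = d)"

end

theory Submission
  imports Defs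
begin


fun wk :: "nat set set \<Rightarrow> nat list \<Rightarrow> bool" where
  "wk E [] = False"
| "wk E [x] = True"
| "wk E (x # y # zs) = ({x, y} \<in> E \<and> wk E (y # zs))"

lemma walk_Cons2: "walk E (x # y # zs) \<longleftrightarrow> {x, y} \<in> E \<and> walk E (y # zs)"
  unfolding walk_def
proof safe
  fix i assume "\<forall>i. Suc i < length (x # y # zs) \<longrightarrow> {(x # y # zs) ! i, (x # y # zs) ! Suc i} \<in> E"
    "Suc i < length (y # zs)"
  then show "{(y # zs) ! i, (y # zs) ! Suc i} \<in> E" by auto
next
  assume "\<forall>i. Suc i < length (x # y # zs) \<longrightarrow> {(x # y # zs) ! i, (x # y # zs) ! Suc i} \<in> E"
  then show "{x, y} \<in> E" by fastforce
next
  fix i assume "{x, y} \<in> E" "\<forall>i. Suc i < length (y # zs) \<longrightarrow> {(y # zs) ! i, (y # zs) ! Suc i} \<in> E"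
    "Suc i < length (x # y # zs)"
  then show "{(x # y # zs) ! i, (x # y # zs) ! Suc i} \<in> E"
    by (cases i) auto
qed

lemma walk_wk: "walk E p \<longleftrightarrow> wk E p"
proof (induction E p rule: wk.induct)
  case (1 E) then show ?case by (simp add: walk_def)
next
  case (2 E x) then show ?case by (simp add: walk_def)
next
  case (3 E x y zs) then show ?case by (simp add: walk_Cons2)
qed

lemma wk_append_single: "wk E (xs @ y # ys) \<longleftrightarrow> wk E (xs @ [y]) \<and> wk E (y # ys)"
proof (induction xs)
  case Nil then show ?case by simp
next
  case (Cons a xs) then show ?case by (cases xs) auto
qed

lemma wk_prefix: "wk E (xs @ ys) \<Longrightarrow> xs \<noteq> [] \<Longrightarrow> wk E xs"
proof (induction xs)
  case Nil then show ?case by simp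
next
  case (Cons a xs) then show ?case by (cases xs; cases ys) auto
qed

lemma wk_suffix: "wk E (xs @ ys) \<Longrightarrow> ys \<noteq> [] \<Longrightarrow> wk E ys"
proof (induction xs)
  case Nil then show ?case by simp
next
  case (Cons a xs) then show ?case by (cases xs; cases ys) auto
qed

lemma wk_take: "wk E q \<Longrightarrow> 0 < n \<Longrightarrow> wk E (take n q)"
proof -
  assume a: "wk E q" "0 < n"
  have "q \<noteq> []" using a by auto
  then have "take n q \<noteq> []" using a by simp
  moreover have "wk E (take n q @ drop n q)" using a by simp
  ultimately show ?thesis using wk_prefix by blast
qed

lemma wk_rev: "wk E xs \<Longrightarrow> wk E (rev xs)"
proof (induction xs)
  case Nil then show ?case by simp
next
  case (Cons x xs)
  show ?case
  proof (cases xs)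
    case Nil then show ?thesis by simp
  next
    case (Cons y ys)
    with Cons.prems have e: "{x,y} \<in> E" and w: "wk E (y # ys)" by auto
    have "wk E (rev ys @ [y])" using Cons.IH w Cons by simp
    moreover have "wk E [y, x]" using e by (simp add: insert_commute)
    ultimately have "wk E (rev ys @ y # [x])" using wk_append_single by blast
    then show ?thesis using Cons by simp
  qed
qed

lemma wk_mono: "wk E p \<Longrightarrow> E \<subseteq> E' \<Longrightarrow> wk E' p"
  by (induction E p rule: wk.induct) auto

lemma wk_join: "wk E (xs @ [y]) \<Longrightarrow> wk E (y # ys) \<Longrightarrow> wk E (xs @ y # ys)"
  using wk_append_single by blast

lemma wk_distinct_sub:
  "wk E q \<Longrightarrow> \<exists>q'. wk E q' \<and> distinct q' \<and> hd q' = hd q \<and> last q' = last q \<and> length q' \<le> length q"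
proof (induction "length q" arbitrary: q rule: less_induct)
  case less
  show ?case
  proof (cases "distinct q")
    case True then show ?thesis using less.prems by blast
  next
    case False
    then obtain xs y ys zs where q: "q = xs @ [y] @ ys @ [y] @ zs"
      using not_distinct_decomp by blast
    have w1: "wk E (xs @ [y])" and w2: "wk E (y # ys @ y # zs)"
      using less.prems q wk_append_single[of E xs y "ys @ y # zs"] by auto
    have "wk E (y # zs)" using w2 wk_append_single[of E "y # ys" y zs] by simp
    then have w: "wk E (xs @ y # zs)" using w1 wk_join by blast
    have l: "length (xs @ y # zs) < length q" using q by simp
    have h: "hd (xs @ y # zs) = hd q" using q by (cases xs) auto
    have la: "last (xs @ y # zs) = last q" using q by (cases zs) auto
    from less.hyps[OF l w] h la l show ?thesis by fastforce
  qed
qed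



lemma acyc_wk: "acyclic_graph E \<Longrightarrow> length c \<ge> 3 \<Longrightarrow> distinct c \<Longrightarrow> wk E c \<Longrightarrow> {last c, hd c} \<in> E \<Longrightarrow> False"
  unfolding acyclic_graph_def is_cycle_def walk_wk by blast

lemma path_unique:
  assumes "acyclic_graph E"
  shows "distinct p \<Longrightarrow> distinct q \<Longrightarrow> wk E p \<Longrightarrow> wk E q \<Longrightarrow> hd p = hd q \<Longrightarrow> last p = last q \<Longrightarrow> p = q"
proof (induction p arbitrary: q)
  case Nil then show ?case by simp
next
  case (Cons u p1)
  obtain q1 where q: "q = u # q1" using Cons.prems by (cases q) auto
  show ?case
  proof (cases "p1 = []")
    case True
    then have "last q = u" using Cons.prems by simp
    have "q1 = []"
    proof (rule ccontr)
      assume "q1 \<noteq> []"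
      then have "last q \<in> set q1" using q by simp
      then show False using \<open>last q = u\<close> Cons.prems q by simp
    qed
    then show ?thesis using q True by simp
  next
    case p1ne: False
    show ?thesis
    proof (cases "q1 = []")
      case True
      then have "last (u # p1) = u" using Cons.prems q by simp
      then show ?thesis using Cons.prems q p1ne by auto
    next
      case q1ne: False
      have wp1: "wk E p1" and wq1: "wk E q1" using Cons.prems q p1ne q1ne
        by (cases p1; auto; cases q1; auto)+
      have lp: "last p1 = last q1" using Cons.prems q p1ne q1ne by simp
      show ?thesis
      proof (cases "hd p1 = hd q1")
        case True
        then have "p1 = q1" using Cons.IH[of q1] Cons.prems q wp1 wq1 lp by simp
        then show ?thesis using q by simp
      next
        case hne: False
        have "\<exists>x\<in>set p1. x \<in> set q1" using lp p1ne q1ne by (metis last_in_set)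
        then obtain r w r' where p1s: "p1 = r @ w # r'" and wq: "w \<in> set q1"
          and rq: "\<forall>x\<in>set r. x \<notin> set q1"
          using split_list_first_prop[of p1 "\<lambda>x. x \<in> set q1"] by blast
        obtain t t' where q1s: "q1 = t @ w # t'" using wq split_list by metis
        define c where "c = (u # r) @ w # rev t"
        have "wk E ((u # r) @ w # r')" using Cons.prems p1s by simp
        then have w1: "wk E ((u # r) @ [w])" using wk_append_single by blast
        have "wk E (t @ w # t')" using wq1 q1s by simp
        then have "wk E (t @ [w])" using wk_append_single by blast
        then have "wk E (rev (t @ [w]))" by (rule wk_rev)
        then have w2: "wk E (w # rev t)" by simp
        have wc: "wk E c" unfolding c_def using w1 w2 wk_join by blast
        have dc: "distinct c" unfolding c_def using Cons.prems q p1s q1s rq by auto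
        have hc: "hd c = u" unfolding c_def by simp
        have lc: "last c = hd q1" unfolding c_def using q1s by (cases t) auto
        have "{u, hd q1} \<in> E" using Cons.prems q q1ne by (cases q1) auto
        then have ec: "{last c, hd c} \<in> E" using hc lc by (simp add: insert_commute)
        have "length c \<ge> 3"
        proof (rule ccontr)
          assume "\<not> 3 \<le> length c"
          then have "r = [] \<and> t = []" unfolding c_def by (cases r; cases t) auto
          then show False using hne p1s q1s by simp
        qed
        then show ?thesis using acyc_wk[OF assms] wc dc ec by blast
      qed
    qed
  qed
qed

lemma path_shortest:
  assumes "acyclic_graph E" "distinct p" "wk E p" "wk E q" "hd q = hd p" "last q = last p"
  shows "length p \<le> length q"
proof -
  obtain q' where q': "wk E q'" "distinct q'" "hd q' = hd q" "last q' = last q" "length q' \<le> length q"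
    using wk_distinct_sub[OF assms(4)] by blast
  have "p = q'" using path_unique[OF assms(1) assms(2) q'(2) assms(3) q'(1)] q' assms by simp
  then show ?thesis using q' by simp
qed

lemma gdist_le: "wk E p \<Longrightarrow> gdist E (hd p) (last p) \<le> length p - 1"
  unfolding gdist_def walk_wk
  by (rule Least_le) (cases p; auto)

lemma gdist_ge:
  assumes "acyclic_graph E" "distinct p" "wk E p"
  shows "length p \<le> Suc (gdist E (hd p) (last p))"
proof -
  have ex: "\<exists>k q. walk E q \<and> hd q = hd p \<and> last q = last p \<and> length q = Suc k"
    using assms(3) walk_wk by (intro exI[of _ "length p - 1"] exI[of _ p]) (cases p, auto)
  have "\<exists>q. walk E q \<and> hd q = hd p \<and> last q = last p \<and> length q = Suc (gdist E (hd p) (last p))"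
    unfolding gdist_def by (rule LeastI_ex[OF ex])
  then obtain q where "wk E q" "hd q = hd p" "last q = last p" "length q = Suc (gdist E (hd p) (last p))"
    using walk_wk by blast
  then show ?thesis using path_shortest[OF assms] by metis
qed

lemma tree_finE: "tree V E \<Longrightarrow> finite V \<and> finite E \<and> (\<forall>e\<in>E. e \<subseteq> V \<and> card e = 2)"
  unfolding tree_def graph_def
  by (metis Pow_iff finite_Pow_iff finite_subset subsetI)

lemma diam_ge: "tree V E \<Longrightarrow> u \<in> V \<Longrightarrow> v \<in> V \<Longrightarrow> gdist E u v \<le> tree_diam V E"
  unfolding tree_diam_def
proof -
  assume a: "tree V E" "u \<in> V" "v \<in> V"
  have "{gdist E u v |u v. u \<in> V \<and> v \<in> V} = (\<lambda>(u,v). gdist E u v) ` (V \<times> V)" by auto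
  moreover have "finite (V \<times> V)" using tree_finE[OF a(1)] by simp
  ultimately have "finite {gdist E u v |u v. u \<in> V \<and> v \<in> V}" by simp
  then show "gdist E u v \<le> Max {gdist E u v |u v. u \<in> V \<and> v \<in> V}"
    using a by (intro Max_ge) auto
qed

lemma diam_le: "tree V E \<Longrightarrow> (\<And>u v. u \<in> V \<Longrightarrow> v \<in> V \<Longrightarrow> gdist E u v \<le> d) \<Longrightarrow> tree_diam V E \<le> d"
  unfolding tree_diam_def
proof -
  assume a: "tree V E" "\<And>u v. u \<in> V \<Longrightarrow> v \<in> V \<Longrightarrow> gdist E u v \<le> d"
  have "{gdist E u v |u v. u \<in> V \<and> v \<in> V} = (\<lambda>(u,v). gdist E u v) ` (V \<times> V)" by auto
  moreover have "finite (V \<times> V)" using tree_finE[OF a(1)] by simp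
  ultimately have f: "finite {gdist E u v |u v. u \<in> V \<and> v \<in> V}" by simp
  have "V \<noteq> {}" using a(1) tree_def by blast
  then have ne: "{gdist E u v |u v. u \<in> V \<and> v \<in> V} \<noteq> {}" by blast
  show "Max {gdist E u v |u v. u \<in> V \<and> v \<in> V} \<le> d"
    using f ne a(2) by (subst Max_le_iff) auto
qed



lemma edge_form: "card e = 2 \<Longrightarrow> v \<in> e \<Longrightarrow> \<exists>a. a \<noteq> v \<and> e = {v, a}"
proof -
  assume a: "card e = 2" "v \<in> e"
  then obtain x y where xy: "e = {x,y}" "x \<noteq> y" by (auto simp: card_2_iff)
  show ?thesis
  proof (cases "v = x")
    case True then show ?thesis using xy by (intro exI[of _ y]) auto
  next
    case False then have "v = y" using a xy by auto
    then show ?thesis using xy by (intro exI[of _ x]) auto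
  qed
qed

lemma edge_in: "tree V E \<Longrightarrow> {a, b} \<in> E \<Longrightarrow> a \<in> V \<and> b \<in> V \<and> a \<noteq> b"
proof -
  assume a: "tree V E" "{a, b} \<in> E"
  then have "{a,b} \<subseteq> V" "card {a,b} = 2" using tree_finE[of V E] by auto
  moreover have "a \<noteq> b" using \<open>card {a,b} = 2\<close> by (cases "a = b") auto
  ultimately show ?thesis by auto
qed

definition NL :: "nat set set \<Rightarrow> nat \<Rightarrow> bool" where
  "NL E v \<longleftrightarrow> (\<exists>a1 a2 b1 b2. a1 \<noteq> a2 \<and> {v,a1} \<in> E \<and> {v,a2} \<in> E \<and> {a1,b1} \<in> E \<and> {a2,b2} \<in> E \<and> b1 \<noteq> v \<and> b2 \<noteq> v)"

lemma neg_nonleaf: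
  assumes t: "tree V E" and m1: "-1 \<notin> sdeg E s ` V" and e: "{v,a} \<in> E" and ns: "\<not> s {v,a}"
  shows "\<exists>b. b \<noteq> v \<and> {a,b} \<in> E"
proof (rule ccontr)
  assume nb: "\<not> (\<exists>b. b \<noteq> v \<and> {a,b} \<in> E)"
  have ed: "\<forall>e\<in>E. e \<subseteq> V \<and> card e = 2" using tree_finE[OF t] by blast
  have aV: "a \<in> V" using edge_in[OF t e] by simp
  have sub: "e = {v,a}" if ee: "e \<in> E" and ae: "a \<in> e" for e
  proof -
    have "card e = 2" using ed ee by blast
    from edge_form[OF this ae] obtain b where b: "b \<noteq> a" "e = {a,b}" by blast
    have "b = v"
    proof (rule ccontr)
      assume "b \<noteq> v"
      then show False using nb b ee by blast
    qed
    then show ?thesis using b by (simp add: insert_commute)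
  qed
  have p: "{e\<in>E. a \<in> e \<and> s e} = {}"
  proof (rule equals0I)
    fix e assume "e \<in> {e\<in>E. a \<in> e \<and> s e}"
    then have "e = {v,a}" "s e" using sub by auto
    then show False using ns by simp
  qed
  have n: "{e\<in>E. a \<in> e \<and> \<not> s e} = {{v,a}}"
  proof
    show "{e\<in>E. a \<in> e \<and> \<not> s e} \<subseteq> {{v,a}}" using sub by auto
    show "{{v,a}} \<subseteq> {e\<in>E. a \<in> e \<and> \<not> s e}" using e ns by auto
  qed
  have "sdeg E s a = -1" unfolding sdeg_def p n by simp
  moreover have "sdeg E s a \<in> sdeg E s ` V" using aV by (rule imageI)
  ultimately show False using m1 by simp
qed

lemma NL_of:
  assumes t: "tree V E" and m1: "-1 \<notin> sdeg E s ` V" and vV: "v \<in> V" and le: "sdeg E s v \<le> -2"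
  shows "NL E v"
proof -
  have fe: "finite E" and ed: "\<forall>e\<in>E. e \<subseteq> V \<and> card e = 2" using tree_finE[OF t] by auto
  let ?N = "{e\<in>E. v \<in> e \<and> \<not> s e}"
  have "card ?N \<ge> 2" using le unfolding sdeg_def by linarith
  moreover have "finite ?N" using fe by simp
  ultimately obtain e1 e2 where e12: "e1 \<in> ?N" "e2 \<in> ?N" "e1 \<noteq> e2"
  proof -
    have "\<not> card ?N \<le> Suc 0" using \<open>card ?N \<ge> 2\<close> by simp
    then show ?thesis using that card_le_Suc0_iff_eq[OF \<open>finite ?N\<close>] by blast
  qed
  have c1: "card e1 = 2" "v \<in> e1" using ed e12 by auto
  from edge_form[OF c1] obtain a1 where a1: "a1 \<noteq> v" "e1 = {v,a1}" by blast
  have c2: "card e2 = 2" "v \<in> e2" using ed e12 by auto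
  from edge_form[OF c2] obtain a2 where a2: "a2 \<noteq> v" "e2 = {v,a2}" by blast
  have "a1 \<noteq> a2" using a1 a2 e12 by auto
  moreover obtain b1 where "b1 \<noteq> v" "{a1,b1} \<in> E" using neg_nonleaf[OF t m1, of v a1] a1 e12 by auto
  moreover obtain b2 where "b2 \<noteq> v" "{a2,b2} \<in> E" using neg_nonleaf[OF t m1, of v a2] a2 e12 by auto
  ultimately show ?thesis unfolding NL_def using a1 a2 e12 by blast
qed

lemma wk_take_last: "k < length Q \<Longrightarrow> last (take (Suc k) Q) = Q ! k"
  by (simp add: take_Suc_conv_app_nth)

lemma extend:
  assumes t: "tree V E" and d: "distinct Q" and w: "wk E Q" and ea: "{hd Q, a} \<in> E"
    and a1: "length Q \<ge> 2 \<longrightarrow> a \<noteq> Q ! 1" and eb: "{a, b} \<in> E" and bh: "b \<noteq> hd Q"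
  shows "distinct (b # a # Q) \<and> wk E (b # a # Q)"
proof -
  have ac: "acyclic_graph E" using t tree_def by blast
  have Qne: "Q \<noteq> []" using w by auto
  have ah: "a \<noteq> hd Q" using edge_in[OF t ea] by simp
  have ba: "b \<noteq> a" using edge_in[OF t eb] by simp
  have aQ: "a \<notin> set Q"
  proof
    assume "a \<in> set Q"
    then obtain k where k: "k < length Q" "Q ! k = a" by (auto simp: in_set_conv_nth)
    have "k \<noteq> 0" using k ah hd_conv_nth[OF Qne] by (cases k) auto
    moreover have "k \<noteq> 1" using k a1 by auto
    ultimately have k2: "k \<ge> 2" by simp
    let ?c = "take (Suc k) Q"
    have "length ?c \<ge> 3" using k k2 by simp
    moreover have "distinct ?c" using d by simp
    moreover have "wk E ?c" using wk_take[OF w] by simp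
    moreover have "{last ?c, hd ?c} \<in> E" using wk_take_last[OF k(1)] k ea Qne
      by (simp add: insert_commute hd_take)
    ultimately show False using acyc_wk[OF ac] by blast
  qed
  have bQ: "b \<notin> set Q"
  proof
    assume "b \<in> set Q"
    then obtain k where k: "k < length Q" "Q ! k = b" by (auto simp: in_set_conv_nth)
    have "k \<noteq> 0" using k bh hd_conv_nth[OF Qne] by (cases k) auto
    let ?c = "a # take (Suc k) Q"
    have "length ?c \<ge> 3" using k \<open>k \<noteq> 0\<close> by simp
    moreover have "distinct ?c"
    proof -
      have "a \<notin> set (take (Suc k) Q)" using aQ in_set_takeD by fastforce
      then show ?thesis using d by simp
    qed
    moreover have "wk E ?c"
    proof -
      have "wk E (take (Suc k) Q)" using wk_take[OF w] by simp
      moreover have "take (Suc k) Q = hd Q # tl (take (Suc k) Q)" using Qne by (cases Q) auto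
      moreover have "{a, hd Q} \<in> E" using ea by (simp add: insert_commute)
      ultimately show ?thesis by (metis wk.simps(3))
    qed
    moreover have "{last ?c, hd ?c} \<in> E" using wk_take_last[OF k(1)] k eb Qne
      by (simp add: insert_commute)
    ultimately show False using acyc_wk[OF ac] by blast
  qed
  have "distinct (b # a # Q)" using d aQ bQ ba by simp
  moreover have "wk E (b # a # Q)"
  proof -
    have "Q = hd Q # tl Q" using Qne by simp
    moreover have "{a, hd Q} \<in> E" using ea by (simp add: insert_commute)
    ultimately have "wk E (a # Q)" using w by (metis wk.simps(3))
    then show ?thesis using eb by (simp add: insert_commute)
  qed
  ultimately show ?thesis by blast
qed

lemma lb_main:
  assumes t: "tree V E" and n1: "NL E v1" and n2: "NL E v2" and d: "distinct P" and w: "wk E P"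
    and h: "hd P = v1" and l: "last P = v2"
  shows "length P + 3 \<le> tree_diam V E"
proof -
  have ac: "acyclic_graph E" using t tree_def by blast
  have Pne: "P \<noteq> []" using w by auto
  obtain a b where ab: "{v1,a} \<in> E" "{a,b} \<in> E" "b \<noteq> v1" "length P \<ge> 2 \<longrightarrow> a \<noteq> P ! 1"
  proof -
    obtain a1 a2 b1 b2 where "a1 \<noteq> a2 \<and> {v1,a1} \<in> E \<and> {v1,a2} \<in> E \<and> {a1,b1} \<in> E \<and> {a2,b2} \<in> E \<and> b1 \<noteq> v1 \<and> b2 \<noteq> v1"
      using n1 unfolding NL_def by blast
    then have A: "a1 \<noteq> a2" "{v1,a1} \<in> E" "{v1,a2} \<in> E" "{a1,b1} \<in> E" "{a2,b2} \<in> E" "b1 \<noteq> v1" "b2 \<noteq> v1"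
      by auto
    show ?thesis
    proof (cases "a1 = P ! 1")
      case True
      then have "a2 \<noteq> P ! 1" using A by simp
      then show ?thesis using that[of a2 b2] A by blast
    next
      case False
      then show ?thesis using that[of a1 b1] A by blast
    qed
  qed
  have Q: "distinct (b # a # P) \<and> wk E (b # a # P)"
    using ab h by (intro extend[OF t d w, of a b]) auto
  define R where "R = rev (b # a # P)"
  have dR: "distinct R" using Q unfolding R_def by simp
  have wR: "wk E R" using Q wk_rev unfolding R_def by blast
  have hR: "hd R = v2" unfolding R_def using l Pne by (simp add: hd_rev)
  have lR: "last R = b" unfolding R_def by (simp add: last_rev)
  obtain a' b' where ab': "{v2,a'} \<in> E" "{a',b'} \<in> E" "b' \<noteq> v2" "length R \<ge> 2 \<longrightarrow> a' \<noteq> R ! 1"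
  proof -
    obtain a1 a2 b1 b2 where "a1 \<noteq> a2 \<and> {v2,a1} \<in> E \<and> {v2,a2} \<in> E \<and> {a1,b1} \<in> E \<and> {a2,b2} \<in> E \<and> b1 \<noteq> v2 \<and> b2 \<noteq> v2"
      using n2 unfolding NL_def by blast
    then have A: "a1 \<noteq> a2" "{v2,a1} \<in> E" "{v2,a2} \<in> E" "{a1,b1} \<in> E" "{a2,b2} \<in> E" "b1 \<noteq> v2" "b2 \<noteq> v2"
      by auto
    show ?thesis
    proof (cases "a1 = R ! 1")
      case True
      then have "a2 \<noteq> R ! 1" using A by simp
      then show ?thesis using that[of a2 b2] A by blast
    next
      case False
      then show ?thesis using that[of a1 b1] A by blast
    qed
  qed
  have F: "distinct (b' # a' # R) \<and> wk E (b' # a' # R)"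
    using ab' hR by (intro extend[OF t dR wR, of a' b']) auto
  have "length (b' # a' # R) \<le> Suc (gdist E (hd (b' # a' # R)) (last (b' # a' # R)))"
    using F by (intro gdist_ge[OF ac]) auto
  moreover have "last (b' # a' # R) = b" using lR R_def by simp
  moreover have "length (b' # a' # R) = length P + 4" unfolding R_def by simp
  moreover have "b' \<in> V" using edge_in[OF t ab'(2)] by simp
  moreover have "b \<in> V" using edge_in[OF t ab(2)] by simp
  moreover have "gdist E b' b \<le> tree_diam V E" using diam_ge[OF t, of b' b] \<open>b' \<in> V\<close> \<open>b \<in> V\<close> by blast
  ultimately show ?thesis by simp
qed



definition near :: "nat set set \<Rightarrow> nat \<Rightarrow> nat \<Rightarrow> nat \<Rightarrow> bool" where
  "near E c r u \<longleftrightarrow> (\<exists>p. wk E p \<and> hd p = c \<and> last p = u \<and> length p \<le> Suc r)"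

lemma near_refl: "near E c 0 c"
  unfolding near_def by (intro exI[of _ "[c]"]) simp

lemma near_edge: "{v,u} \<in> E \<Longrightarrow> near E v 1 u"
  unfolding near_def by (intro exI[of _ "[v,u]"]) simp

lemma near_monoE: "near E c r u \<Longrightarrow> E \<subseteq> E' \<Longrightarrow> near E' c r u"
  unfolding near_def using wk_mono by blast

lemma near_monor: "near E c r u \<Longrightarrow> r \<le> r' \<Longrightarrow> near E c r' u"
  unfolding near_def by fastforce

lemma near_sym: "near E c r u \<Longrightarrow> near E u r c"
  unfolding near_def
proof (elim exE conjE)
  fix p assume a: "wk E p" "hd p = c" "last p = u" "length p \<le> Suc r"
  have "p \<noteq> []" using a by auto
  then show "\<exists>p. wk E p \<and> hd p = u \<and> last p = c \<and> length p \<le> Suc r"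
    using a wk_rev by (intro exI[of _ "rev p"]) (auto simp: hd_rev last_rev)
qed

lemma near_trans: "near E c r v \<Longrightarrow> near E v k u \<Longrightarrow> near E c (r + k) u"
  unfolding near_def
proof (elim exE conjE)
  fix p q assume p: "wk E p" "hd p = c" "last p = v" "length p \<le> Suc r"
    and q: "wk E q" "hd q = v" "last q = u" "length q \<le> Suc k"
  have pne: "p \<noteq> []" and qne: "q \<noteq> []" using p q by auto
  have pe: "butlast p @ [v] = p" using append_butlast_last_id[OF pne] p(3) by simp
  have qe: "v # tl q = q" using qne q by (cases q) auto
  have w1: "wk E (butlast p @ [v])" using p(1) pe by simp
  have w2: "wk E (v # tl q)" using q(1) qe by simp
  have w: "wk E (butlast p @ v # tl q)" using wk_join[OF w1 w2] .
  have h: "hd (butlast p @ v # tl q) = c"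
  proof (cases "butlast p")
    case Nil then show ?thesis using pe p(2) by auto
  next
    case (Cons x xs) then show ?thesis using pe p(2) by (metis append_Cons list.sel(1))
  qed
  have "last (butlast p @ v # tl q) = last (v # tl q)" by simp
  then have l: "last (butlast p @ v # tl q) = u" using qe q(3) by simp
  have "length (butlast p @ v # tl q) \<le> Suc (r + k)" using p q pne qne by simp
  then show "\<exists>p. wk E p \<and> hd p = c \<and> last p = u \<and> length p \<le> Suc (r + k)" using w h l by blast
qed

lemma gdist_near: "near E u k v \<Longrightarrow> gdist E u v \<le> k"
  unfolding near_def using gdist_le by fastforce

lemma diam_center:
  assumes t: "tree V E" and n: "\<forall>u\<in>V. near E c r u"
  shows "tree_diam V E \<le> 2 * r"
proof (rule diam_le[OF t])
  fix u v assume "u \<in> V" "v \<in> V"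
  then have "near E u r c" "near E c r v" using n near_sym by blast+
  then have "near E u (r + r) v" by (rule near_trans)
  then show "gdist E u v \<le> 2 * r" using gdist_near by fastforce
qed

lemma diam_bicenter:
  assumes t: "tree V E" and e: "{c1,c2} \<in> E" and n: "\<forall>u\<in>V. near E c1 r u \<or> near E c2 r u"
  shows "tree_diam V E \<le> 2 * r + 1"
proof (rule diam_le[OF t])
  have e12: "near E c1 1 c2" using near_edge[OF e] .
  have e21: "near E c2 1 c1" using near_edge[of c2 c1 E] e by (simp add: insert_commute)
  have n1: "near E c1 (1 + r) u" if "u \<in> V" for u
  proof -
    have "near E c1 r u \<or> near E c2 r u" using n that by blast
    then show ?thesis
    proof
      assume "near E c1 r u" then show ?thesis using near_monor by fastforce
    next
      assume "near E c2 r u" then show ?thesis using near_trans[OF e12] by blast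
    qed
  qed
  fix u v assume uv: "u \<in> V" "v \<in> V"
  have "near E c1 r u \<or> near E c2 r u" using n uv by blast
  then have "near E u (r + (1 + r)) v"
  proof
    assume "near E c1 r u"
    then show ?thesis using near_trans[OF near_sym n1[OF uv(2)]] by blast
  next
    assume a: "near E c2 r u"
    have "near E c2 (1 + (1 + r)) v" using near_trans[OF e21 n1[OF uv(2)]] .
    have "near E c1 r v \<or> near E c2 r v" using n uv by blast
    then show ?thesis
    proof
      assume "near E c1 r v"
      then have "near E c2 (1 + r) v" using near_trans[OF e21] by blast
      then show ?thesis using near_trans[OF near_sym[OF a]] by blast
    next
      assume "near E c2 r v"
      then have "near E u (r + r) v" using near_trans[OF near_sym[OF a]] by blast
      then show ?thesis using near_monor by fastforce
    qed
  qed
  then show "gdist E u v \<le> 2 * r + 1" using gdist_near by fastforce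
qed



lemma sdeg_insert:
  assumes fe: "finite E" and xE: "x \<notin> E"
  shows "sdeg (insert x E) (s(x := b)) u = sdeg E s u + (if u \<in> x then (if b then 1 else -1) else 0)"
proof -
  have eq: "(s(x := b)) e = s e" if "e \<in> E" for e using that xE by auto
  have P: "{e \<in> insert x E. u \<in> e \<and> (s(x := b)) e} = (if u \<in> x \<and> b then insert x {e\<in>E. u \<in> e \<and> s e} else {e\<in>E. u \<in> e \<and> s e})"
    using eq xE by auto
  have N: "{e \<in> insert x E. u \<in> e \<and> \<not> (s(x := b)) e} = (if u \<in> x \<and> \<not> b then insert x {e\<in>E. u \<in> e \<and> \<not> s e} else {e\<in>E. u \<in> e \<and> \<not> s e})"
    using eq xE by auto
  have f1: "finite {e\<in>E. u \<in> e \<and> s e}" and f2: "finite {e\<in>E. u \<in> e \<and> \<not> s e}" using fe by auto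
  have n1: "x \<notin> {e\<in>E. u \<in> e \<and> s e}" and n2: "x \<notin> {e\<in>E. u \<in> e \<and> \<not> s e}" using xE by auto
  show ?thesis unfolding sdeg_def P N using f1 f2 n1 n2 by (cases "u \<in> x"; cases b) auto
qed

lemma sdeg_none: "(\<forall>e\<in>E. u \<notin> e) \<Longrightarrow> sdeg E s u = 0"
proof -
  assume a: "\<forall>e\<in>E. u \<notin> e"
  have e1: "{e\<in>E. u \<in> e \<and> s e} = {}" using a by blast
  have e2: "{e\<in>E. u \<in> e \<and> \<not> s e} = {}" using a by blast
  show ?thesis unfolding sdeg_def e1 e2 by simp
qed

lemma wk_avoid: "wk (insert x E) c \<Longrightarrow> y \<in> x \<Longrightarrow> y \<notin> set c \<Longrightarrow> wk E c"
  by (induction "insert x E" c rule: wk.induct) auto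

lemma wk_last_edge: "wk E (xs @ [y]) \<Longrightarrow> xs \<noteq> [] \<Longrightarrow> {last xs, y} \<in> E"
proof -
  assume a: "wk E (xs @ [y])" "xs \<noteq> []"
  have "xs @ [y] = butlast xs @ last xs # [y]" using a(2) by simp
  then have "wk E (last xs # [y])" using a(1) wk_append_single by metis
  then show ?thesis by simp
qed

lemma wk_first_edge: "wk E (y # ys) \<Longrightarrow> ys \<noteq> [] \<Longrightarrow> {y, hd ys} \<in> E"
  by (cases ys) auto

lemma hd_last_distinct: "distinct ys \<Longrightarrow> length ys \<ge> 2 \<Longrightarrow> hd ys \<noteq> last ys"
  by (cases ys) auto

lemma add_leaf_tree:
  assumes t: "tree V E" and vV: "v \<in> V" and wV: "w \<notin> V"
  shows "tree (insert w V) (insert {v,w} E)"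
proof -
  have fV: "finite V" and fE: "finite E" and ed: "\<forall>e\<in>E. e \<subseteq> V \<and> card e = 2"
    using tree_finE[OF t] by auto
  have vw: "v \<noteq> w" using vV wV by auto
  have g: "graph (insert w V) (insert {v,w} E)"
    unfolding graph_def using fV ed vw vV by auto
  have con: "connected_graph V E" and ac: "acyclic_graph E" using t tree_def by auto
  have cw: "\<exists>p. wk (insert {v,w} E) p \<and> set p \<subseteq> insert w V \<and> hd p = w \<and> last p = u" if "u \<in> insert w V" for u
  proof (cases "u = w")
    case True then show ?thesis by (intro exI[of _ "[w]"]) auto
  next
    case False
    then have "u \<in> V" using that by simp
    then obtain p where p: "wk E p" "set p \<subseteq> V" "hd p = v" "last p = u"
      using con vV unfolding connected_graph_def walk_wk by blast
    have pe: "hd p # tl p = p" using p(1) by (cases p) auto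
    have w1: "wk (insert {v,w} E) p" using wk_mono[OF p(1), of "insert {v,w} E"] by blast
    have "{w, v} \<in> insert {v,w} E" by (simp add: insert_commute)
    moreover have w2: "wk (insert {v,w} E) (v # tl p)" using w1 pe p(3) by simp
    ultimately have ww: "wk (insert {v,w} E) (w # v # tl p)" by simp
    have eq: "w # v # tl p = w # p" using pe p(3) by simp
    have "wk (insert {v,w} E) (w # p)" using ww unfolding eq .
    moreover have "last (w # p) = u" using p(1) p(4) by (cases p) auto
    ultimately show ?thesis using p(2) by (intro exI[of _ "w # p"]) auto
  qed
  have c: "connected_graph (insert w V) (insert {v,w} E)"
    unfolding connected_graph_def walk_wk
  proof (intro ballI)
    fix u1 u2 assume u1: "u1 \<in> insert w V" and u2: "u2 \<in> insert w V"
    show "\<exists>p. wk (insert {v,w} E) p \<and> set p \<subseteq> insert w V \<and> hd p = u1 \<and> last p = u2"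
    proof (cases "u1 = w")
      case True then show ?thesis using cw u2 by blast
    next
      case f1: False
      show ?thesis
      proof (cases "u2 = w")
        case True
        obtain p where p: "wk (insert {v,w} E) p" "set p \<subseteq> insert w V" "hd p = w" "last p = u1"
          using cw u1 by blast
        have "p \<noteq> []" using p by auto
        then show ?thesis using p True wk_rev
          by (intro exI[of _ "rev p"]) (auto simp: hd_rev last_rev)
      next
        case False
        then have "u1 \<in> V" "u2 \<in> V" using u1 u2 f1 by auto
        then obtain p where p: "wk E p" "set p \<subseteq> V" "hd p = u1" "last p = u2"
          using con unfolding connected_graph_def walk_wk by blast
        then show ?thesis using wk_mono[OF p(1), of "insert {v,w} E"] by (intro exI[of _ p]) auto
      qed
    qed
  qed
  have nb: "n = v" if "{n, w} \<in> insert {v,w} E" for n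
  proof -
    have "{n,w} \<notin> E" using ed wV by blast
    then have "{n,w} = {v,w}" using that by simp
    then show "n = v" using vw by (auto simp: doubleton_eq_iff)
  qed
  have a: "acyclic_graph (insert {v,w} E)"
    unfolding acyclic_graph_def is_cycle_def walk_wk
  proof (rule notI, elim exE conjE)
    fix c assume l3: "3 \<le> length c" and dc: "distinct c" and wc: "wk (insert {v,w} E) c"
      and ec: "{last c, hd c} \<in> insert {v,w} E"
    show False
    proof (cases "w \<in> set c")
      case False
      then have "wk E c" using wk_avoid[OF wc, of w] by simp
      moreover have "c \<noteq> []" using l3 by auto
      then have "w \<notin> {last c, hd c}" using False by auto
      then have "{last c, hd c} \<in> E" using ec by auto
      ultimately show False using acyc_wk[OF ac l3 dc] by blast
    next
      case True
      from split_list[OF True] obtain xs ys where c: "c = xs @ w # ys" by blast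
      have w1: "wk (insert {v,w} E) (xs @ [w])" and w2: "wk (insert {v,w} E) (w # ys)"
        using wc c wk_append_single[of "insert {v,w} E" xs w ys] by auto
      show False
      proof (cases "xs = []")
        case True
        then have ys2: "length ys \<ge> 2" using l3 c by simp
        then have yne: "ys \<noteq> []" by auto
        have "{w, hd ys} \<in> insert {v,w} E" using wk_first_edge[OF w2 yne] .
        then have h: "hd ys = v" using nb by (simp add: insert_commute)
        have "{last ys, w} \<in> insert {v,w} E" using ec c True yne by simp
        then have l: "last ys = v" using nb by simp
        have "distinct ys" using dc c by simp
        then show False using hd_last_distinct[OF _ ys2] h l by simp
      next
        case xne: False
        have "{last xs, w} \<in> insert {v,w} E" using wk_last_edge[OF w1 xne] .
        then have lx: "last xs = v" using nb by simp
        show False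
        proof (cases "ys = []")
          case True
          then have xs2: "length xs \<ge> 2" using l3 c by simp
          have "{w, hd xs} \<in> insert {v,w} E" using ec c True xne by simp
          then have h: "hd xs = v" using nb by (simp add: insert_commute)
          have "distinct xs" using dc c by simp
          then show False using hd_last_distinct[OF _ xs2] h lx by simp
        next
          case False
          have "{w, hd ys} \<in> insert {v,w} E" using wk_first_edge[OF w2 False] .
          then have h: "hd ys = v" using nb by (simp add: insert_commute)
          have "last xs \<in> set xs" "hd ys \<in> set ys" using xne False by auto
          then show False using dc c h lx by auto
        qed
      qed
    qed
  qed
  show ?thesis unfolding tree_def using g c a by auto
qed


definition ext :: "nat set \<Rightarrow> nat set set \<Rightarrow> (nat set \<Rightarrow> bool) \<Rightarrow> nat set \<Rightarrow> nat set set \<Rightarrow> (nat set \<Rightarrow> bool) \<Rightarrow> nat \<Rightarrow> int \<Rightarrow> int set \<Rightarrow> nat \<Rightarrow> bool" where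
  "ext V E s V' E' s' v \<delta> S k \<longleftrightarrow> tree V' E' \<and> V \<subseteq> V' \<and> E \<subseteq> E' \<and> (\<forall>u\<in>V-{v}. sdeg E' s' u = sdeg E s u)
     \<and> sdeg E' s' v = sdeg E s v + \<delta> \<and> sdeg E' s' ` (V' - V) = S \<and> (\<forall>u\<in>V'-V. near E' v k u)"

lemma add_leaf_ext:
  assumes t: "tree V E" and vV: "v \<in> V" and wV: "w \<notin> V"
  shows "ext V E s (insert w V) (insert {v,w} E) (s({v,w} := b)) v (if b then 1 else -1) {if b then 1 else -1} 1"
proof -
  have fE: "finite E" and ed: "\<forall>e\<in>E. e \<subseteq> V \<and> card e = 2" using tree_finE[OF t] by auto
  have xE: "{v,w} \<notin> E" using ed wV by blast
  have vw: "v \<noteq> w" using vV wV by auto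
  have sd: "sdeg (insert {v,w} E) (s({v,w} := b)) u = sdeg E s u + (if u \<in> {v,w} then (if b then 1 else -1) else 0)" for u
    using sdeg_insert[OF fE xE] .
  have w0: "sdeg E s w = 0" using ed wV by (intro sdeg_none) blast
  have "insert w V - V = {w}" using wV by auto
  then have img: "sdeg (insert {v,w} E) (s({v,w} := b)) ` (insert w V - V) = {if b then 1 else -1}"
    using sd[of w] w0 by simp
  have B: "\<forall>u\<in>V-{v}. sdeg (insert {v,w} E) (s({v,w} := b)) u = sdeg E s u"
  proof
    fix u assume "u \<in> V - {v}"
    then have "u \<notin> {v,w}" using wV by auto
    then show "sdeg (insert {v,w} E) (s({v,w} := b)) u = sdeg E s u" using sd[of u] by simp
  qed
  have C: "sdeg (insert {v,w} E) (s({v,w} := b)) v = sdeg E s v + (if b then 1 else -1)" using sd[of v] by simp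
  have F: "\<forall>u\<in>insert w V - V. near (insert {v,w} E) v 1 u" using near_edge[of v w "insert {v,w} E"] wV by auto
  have T: "tree (insert w V) (insert {v,w} E)" using add_leaf_tree[OF t vV wV] .
  show ?thesis unfolding ext_def
  proof (intro conjI)
  qed (use T B C img F in auto)
qed

lemma fresh: "tree V E \<Longrightarrow> \<exists>w::nat. w \<notin> V"
proof -
  assume "tree V E"
  then have "finite V" using tree_finE by blast
  then show ?thesis using ex_new_if_finite[OF infinite_UNIV_nat] by blast
qed

lemma ext_refl: "tree V E \<Longrightarrow> ext V E s V E s v 0 {} k"
  unfolding ext_def by auto

lemma ext_tree: "ext V E s V' E' s' v \<delta> S k \<Longrightarrow> tree V' E'"
  unfolding ext_def by auto

lemma ext_sub: "ext V E s V' E' s' v \<delta> S k \<Longrightarrow> V \<subseteq> V'"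
  unfolding ext_def by auto

lemma ext_monok: "ext V E s V' E' s' v \<delta> S k \<Longrightarrow> k \<le> k' \<Longrightarrow> ext V E s V' E' s' v \<delta> S k'"
  unfolding ext_def using near_monor by blast

lemma ext_trans:
  assumes vV: "v \<in> V" and e1: "ext V E s V1 E1 s1 v \<delta>1 S1 k" and e2: "ext V1 E1 s1 V2 E2 s2 v \<delta>2 S2 k"
  shows "ext V E s V2 E2 s2 v (\<delta>1 + \<delta>2) (S1 \<union> S2) k"
proof -
  have A: "tree V2 E2" "V \<subseteq> V1" "V1 \<subseteq> V2" "E \<subseteq> E1" "E1 \<subseteq> E2" using e1 e2 unfolding ext_def by auto
  have B: "\<forall>u\<in>V-{v}. sdeg E2 s2 u = sdeg E s u"
  proof
    fix u assume u: "u \<in> V - {v}"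
    then have "u \<in> V1 - {v}" using A by auto
    then have "sdeg E2 s2 u = sdeg E1 s1 u" using e2 unfolding ext_def by blast
    also have "\<dots> = sdeg E s u" using u e1 unfolding ext_def by blast
    finally show "sdeg E2 s2 u = sdeg E s u" .
  qed
  have C: "sdeg E2 s2 v = sdeg E s v + (\<delta>1 + \<delta>2)" using e1 e2 A vV unfolding ext_def by auto
  have "sdeg E2 s2 ` (V1 - V) = sdeg E1 s1 ` (V1 - V)"
    using e2 vV unfolding ext_def by (intro image_cong) auto
  then have "sdeg E2 s2 ` (V1 - V) = S1" using e1 unfolding ext_def by simp
  moreover have "V2 - V = (V2 - V1) \<union> (V1 - V)" using A by auto
  ultimately have D: "sdeg E2 s2 ` (V2 - V) = S1 \<union> S2" using e2 unfolding ext_def by auto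
  have F: "\<forall>u\<in>V2-V. near E2 v k u" using e1 e2 A near_monoE unfolding ext_def by blast
  show ?thesis unfolding ext_def using A B C D F by auto
qed

lemma ext_nest:
  assumes vV: "v \<in> V" and wV: "w \<notin> V" and e1: "ext V E s (insert w V) E1 s1 v \<delta>1 {\<sigma>} 1"
    and e2: "ext (insert w V) E1 s1 V2 E2 s2 w \<delta>2 S2 k"
  shows "ext V E s V2 E2 s2 v \<delta>1 ({\<sigma> + \<delta>2} \<union> S2) (Suc k)"
proof -
  from e1 have a1: "E \<subseteq> E1" and b1: "\<forall>u\<in>V-{v}. sdeg E1 s1 u = sdeg E s u"
    and c1: "sdeg E1 s1 v = sdeg E s v + \<delta>1" and d1: "sdeg E1 s1 ` (insert w V - V) = {\<sigma>}"
    and f1: "\<forall>u\<in>insert w V - V. near E1 v 1 u"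
    unfolding ext_def by blast+
  from e2 have t2: "tree V2 E2" and s2: "insert w V \<subseteq> V2" and a2: "E1 \<subseteq> E2"
    and b2: "\<forall>u\<in>insert w V-{w}. sdeg E2 s2 u = sdeg E1 s1 u"
    and c2: "sdeg E2 s2 w = sdeg E1 s1 w + \<delta>2" and d2: "sdeg E2 s2 ` (V2 - insert w V) = S2"
    and f2: "\<forall>u\<in>V2 - insert w V. near E2 w k u"
    unfolding ext_def by blast+
  have vw: "v \<noteq> w" using vV wV by auto
  have iw: "insert w V - V = {w}" using wV by auto
  have sw: "sdeg E1 s1 w = \<sigma>" using d1 unfolding iw by simp
  have B: "\<forall>u\<in>V-{v}. sdeg E2 s2 u = sdeg E s u"
  proof
    fix u assume u: "u \<in> V - {v}"
    then have "u \<in> insert w V - {w}" using wV by auto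
    then have "sdeg E2 s2 u = sdeg E1 s1 u" using b2 by blast
    also have "\<dots> = sdeg E s u" using u b1 by blast
    finally show "sdeg E2 s2 u = sdeg E s u" .
  qed
  have "v \<in> insert w V - {w}" using vV vw by simp
  then have C: "sdeg E2 s2 v = sdeg E s v + \<delta>1" using b2 c1 by simp
  have sw2: "sdeg E2 s2 w = \<sigma> + \<delta>2" using c2 sw by simp
  have "V2 - V = insert w (V2 - insert w V)" using s2 wV by auto
  then have D: "sdeg E2 s2 ` (V2 - V) = {\<sigma> + \<delta>2} \<union> S2" using d2 sw2 by simp
  have nw: "near E2 v 1 w" using f1 iw near_monoE[OF _ a2] by simp
  have F: "\<forall>u\<in>V2-V. near E2 v (Suc k) u"
  proof
    fix u assume u: "u \<in> V2 - V"
    show "near E2 v (Suc k) u"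
    proof (cases "u = w")
      case True then show ?thesis using nw near_monor by fastforce
    next
      case False
      then have "near E2 w k u" using f2 u by blast
      then show ?thesis using near_trans[OF nw] by simp
    qed
  qed
  have ss: "V \<subseteq> V2" using s2 by blast
  have ee: "E \<subseteq> E2" using a1 a2 by blast
  show ?thesis unfolding ext_def using t2 ss ee B C D F by blast
qed



lemma ext_cong: "ext V E s V' E' s' v \<delta> S k \<Longrightarrow> \<delta> = \<delta>' \<Longrightarrow> S = S' \<Longrightarrow> k = k' \<Longrightarrow> ext V E s V' E' s' v \<delta>' S' k'"
  by simp

lemma ext_rep:
  assumes step: "\<And>V E s. tree V E \<Longrightarrow> v \<in> V \<Longrightarrow> \<exists>V' E' s'. ext V E s V' E' s' v \<delta> S k"
  shows "tree V E \<Longrightarrow> v \<in> V \<Longrightarrow> \<exists>V' E' s'. ext V E s V' E' s' v (int j * \<delta>) (if j = 0 then {} else S) k"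
proof (induction j)
  case 0
  then show ?case using ext_refl[OF 0(1)] by fastforce
next
  case (Suc j)
  then obtain V1 E1 s1 where e1: "ext V E s V1 E1 s1 v (int j * \<delta>) (if j = 0 then {} else S) k" by blast
  have t1: "tree V1 E1" using ext_tree[OF e1] .
  have v1: "v \<in> V1" using ext_sub[OF e1] Suc.prems(2) by blast
  obtain V2 E2 s2 where e2: "ext V1 E1 s1 V2 E2 s2 v \<delta> S k" using step[OF t1 v1] by blast
  have "ext V E s V2 E2 s2 v (int j * \<delta> + \<delta>) ((if j = 0 then {} else S) \<union> S) k"
    using ext_trans[OF Suc.prems(2) e1 e2] .
  moreover have "int j * \<delta> + \<delta> = int (Suc j) * \<delta>" by (simp add: algebra_simps)
  moreover have "(if j = 0 then {} else S) \<union> S = (if Suc j = 0 then {} else S)" by auto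
  ultimately show ?case by (metis ext_cong)
qed

lemma ext_set:
  assumes fin: "finite A"
  shows "(\<forall>a\<in>A. \<forall>V E s. tree V E \<longrightarrow> v \<in> V \<longrightarrow> (\<exists>V' E' s'. ext V E s V' E' s' v \<delta> {g a, 1} k))
     \<Longrightarrow> tree V E \<Longrightarrow> v \<in> V \<Longrightarrow> \<exists>V' E' s'. ext V E s V' E' s' v (int (card A) * \<delta>) (g ` A \<union> (if A = {} then {} else {1})) k"
  using fin
proof (induction A arbitrary: V E s rule: finite_induct)
  case empty
  then show ?case using ext_refl[OF empty(2)] by fastforce
next
  case (insert a F)
  then obtain V1 E1 s1 where e1: "ext V E s V1 E1 s1 v (int (card F) * \<delta>) (g ` F \<union> (if F = {} then {} else {1})) k"
    by blast
  have t1: "tree V1 E1" using ext_tree[OF e1] .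
  have v1: "v \<in> V1" using ext_sub[OF e1] insert.prems(3) by blast
  obtain V2 E2 s2 where e2: "ext V1 E1 s1 V2 E2 s2 v \<delta> {g a, 1} k" using insert.prems(1) t1 v1 by blast
  have "ext V E s V2 E2 s2 v (int (card F) * \<delta> + \<delta>) ((g ` F \<union> (if F = {} then {} else {1})) \<union> {g a, 1}) k"
    using ext_trans[OF insert.prems(3) e1 e2] .
  moreover have "int (card F) * \<delta> + \<delta> = int (card (insert a F)) * \<delta>" using insert.hyps by (simp add: algebra_simps)
  moreover have "(g ` F \<union> (if F = {} then {} else {1})) \<union> {g a, 1} = g ` insert a F \<union> (if insert a F = {} then {} else {1})" by auto
  ultimately show ?case by (metis ext_cong)
qed

lemma leaf_step: "tree V E \<Longrightarrow> v \<in> V \<Longrightarrow> \<exists>V' E' s'. ext V E s V' E' s' v (if b then 1 else -1) {if b then 1 else -1} 1"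
  using fresh add_leaf_ext by metis

lemma leaves: "tree V E \<Longrightarrow> v \<in> V \<Longrightarrow> \<exists>V' E' s'. ext V E s V' E' s' v (int j) (if j = 0 then {} else {1}) 1"
  using ext_rep[of v 1 "{1}" 1 V E s j] leaf_step[of _ _ v _ True] by simp

lemma gadget:
  assumes t: "tree V E" and vV: "v \<in> V"
  shows "\<exists>V' E' s'. ext V E s V' E' s' v (if b then 1 else -1) ({(if b then 1 else -1) + int j} \<union> (if j = 0 then {} else {1})) 2"
proof -
  obtain w where wV: "w \<notin> V" using fresh[OF t] by blast
  have e1: "ext V E s (insert w V) (insert {v,w} E) (s({v,w} := b)) v (if b then 1 else -1) {if b then 1 else -1} 1"
    using add_leaf_ext[OF t vV wV] .
  obtain V2 E2 s2 where e2: "ext (insert w V) (insert {v,w} E) (s({v,w} := b)) V2 E2 s2 w (int j) (if j = 0 then {} else {1}) 1"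
    using leaves[OF ext_tree[OF e1], of w] by blast
  have "ext V E s V2 E2 s2 v (if b then 1 else -1) ({(if b then 1 else -1) + int j} \<union> (if j = 0 then {} else {1})) (Suc 1)"
    using ext_nest[OF vV wV e1 e2] .
  then show ?thesis by (metis numeral_2_eq_2 One_nat_def)
qed

lemma ugadgets: "tree V E \<Longrightarrow> v \<in> V \<Longrightarrow> \<exists>V' E' s'. ext V E s V' E' s' v (- int j) (if j = 0 then {} else {1}) 2"
proof -
  assume t: "tree V E" and vV: "v \<in> V"
  have step: "\<exists>V' E' s'. ext V E s V' E' s' v (-1) {1} 2" if "tree V E" "v \<in> V" for V E s
    using gadget[OF that, of s False 2] by simp
  show ?thesis using ext_rep[of v "-1" "{1}" 2 V E s j, OF step t vV] by simp
qed

lemma ygadget: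
  assumes t: "tree V E" and vV: "v \<in> V" and y: "y < -1"
  shows "\<exists>V' E' s'. ext V E s V' E' s' v 1 {y, 1} 3"
proof -
  obtain w where wV: "w \<notin> V" using fresh[OF t] by blast
  have e1: "ext V E s (insert w V) (insert {v,w} E) (s({v,w} := True)) v 1 {1} 1"
    using add_leaf_ext[OF t vV wV, of s True] by simp
  obtain V2 E2 s2 where e2: "ext (insert w V) (insert {v,w} E) (s({v,w} := True)) V2 E2 s2 w (- int (nat (1 - y))) (if nat (1 - y) = 0 then {} else {1}) 2"
    using ugadgets[OF ext_tree[OF e1], of w] by blast
  have "ext V E s V2 E2 s2 v 1 ({1 + - int (nat (1 - y))} \<union> (if nat (1 - y) = 0 then {} else {1})) (Suc 2)"
    using ext_nest[OF vV wV e1 e2] .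
  moreover have "{1 + - int (nat (1 - y))} \<union> (if nat (1 - y) = 0 then {} else {1}) = {y, 1}" using y by auto
  ultimately show ?thesis by (metis ext_cong numeral_3_eq_3 numeral_2_eq_2)
qed

lemma xgadget:
  assumes t: "tree V E" and vV: "v \<in> V" and x: "x > 1"
  shows "\<exists>V' E' s'. ext V E s V' E' s' v 1 {x, 1} 2"
proof -
  have "{1 + int (nat (x - 1))} \<union> (if nat (x - 1) = 0 then {} else {1}) = {x, 1}" using x by auto
  then show ?thesis using gadget[OF t vV, of s True "nat (x - 1)"] by simp
qed

lemma zgadget:
  assumes t: "tree V E" and vV: "v \<in> V"
  shows "\<exists>V' E' s'. ext V E s V' E' s' v (-1) {0, 1} 2"
  using gadget[OF t vV, of s False 1] by (simp add: insert_commute)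

lemma xgadgets:
  assumes "finite X" "\<forall>x\<in>X. x > 1" "tree V E" "v \<in> V"
  shows "\<exists>V' E' s'. ext V E s V' E' s' v (int (card X)) (X \<union> (if X = {} then {} else {1})) 2"
  using ext_set[OF assms(1), of v 1 id 2 V E s] xgadget assms by auto

lemma ygadgets:
  assumes "finite Y" "\<forall>y\<in>Y. y < -1" "tree V E" "v \<in> V"
  shows "\<exists>V' E' s'. ext V E s V' E' s' v (int (card Y)) (Y \<union> (if Y = {} then {} else {1})) 3"
  using ext_set[OF assms(1), of v 1 id 3 V E s] ygadget assms by auto



lemma single_tree: "tree {c} {}"
  unfolding tree_def graph_def connected_graph_def acyclic_graph_def is_cycle_def walk_wk
  by (auto intro!: exI[of _ "[c]"])

lemma finish:
  assumes e: "ext {c} {} s0 V E s c \<delta> S k"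
  shows "tree V E \<and> sdeg E s ` V = insert \<delta> S \<and> tree_diam V E \<le> 2 * k"
proof -
  from e have t: "tree V E" and sub: "{c} \<subseteq> V" and sc: "sdeg E s c = sdeg {} s0 c + \<delta>"
    and im: "sdeg E s ` (V - {c}) = S" and nr: "\<forall>u\<in>V-{c}. near E c k u"
    unfolding ext_def by blast+
  have "sdeg {} s0 c = 0" by (rule sdeg_none) simp
  then have sc': "sdeg E s c = \<delta>" using sc by simp
  have "V = insert c (V - {c})" using sub by blast
  then have "sdeg E s ` V = insert (sdeg E s c) (sdeg E s ` (V - {c}))" by (metis image_insert)
  then have I: "sdeg E s ` V = insert \<delta> S" using sc' im by simp
  have "\<forall>u\<in>V. near E c k u"
  proof
    fix u assume "u \<in> V"
    show "near E c k u"
    proof (cases "u = c")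
      case True then show ?thesis using near_refl near_monor by fastforce
    next
      case False then show ?thesis using nr \<open>u \<in> V\<close> by blast
    qed
  qed
  then have "tree_diam V E \<le> 2 * k" using diam_center[OF t] by blast
  then show ?thesis using t I by blast
qed

lemma constr1:
  assumes fX: "finite X" and X: "\<forall>x\<in>X. x > 1" and y: "y < -1"
  shows "\<exists>V E s. tree V E \<and> sdeg E s ` V = {1, y} \<union> X \<union> (if z then {0} else {}) \<and> tree_diam V E \<le> 4"
proof -
  define c :: nat where "c = 0"
  define s0 :: "nat set \<Rightarrow> bool" where "s0 = (\<lambda>_. True)"
  have t0: "tree {c} {}" by (rule single_tree)
  have c0: "c \<in> {c}" by simp
  define S1 where "S1 = X \<union> (if X = {} then {} else {1})"
  obtain V1 E1 s1 where e1: "ext {c} {} s0 V1 E1 s1 c (int (card X)) S1 2"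
    using xgadgets[OF fX X t0 c0] unfolding S1_def by blast
  have t1: "tree V1 E1" and c1: "c \<in> V1" using ext_tree[OF e1] ext_sub[OF e1] by auto
  show ?thesis
  proof (cases z)
    case True
    obtain V2 E2 s2 where e2: "ext V1 E1 s1 V2 E2 s2 c (-1) {0, 1} 2" using zgadget[OF t1 c1] by blast
    have t2: "tree V2 E2" and c2: "c \<in> V2" using ext_tree[OF e2] ext_sub[OF e2] c1 by auto
    define j where "j = nat (int (card X) - y - 1)"
    have j1: "j \<noteq> 0" "int j = int (card X) - y - 1" using y unfolding j_def by auto
    obtain V3 E3 s3 where e3: "ext V2 E2 s2 V3 E3 s3 c (- int j) (if j = 0 then {} else {1}) 2"
      using ugadgets[OF t2 c2] by blast
    have "ext {c} {} s0 V3 E3 s3 c (int (card X) + -1 + - int j) (S1 \<union> {0, 1} \<union> (if j = 0 then {} else {1})) 2"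
      using ext_trans[OF c0 ext_trans[OF c0 e1 e2] e3] .
    moreover have "int (card X) + -1 + - int j = y" using j1 by simp
    moreover have "insert y (S1 \<union> {0, 1} \<union> (if j = 0 then {} else {1})) = {1, y} \<union> X \<union> (if z then {0} else {})"
      using j1 True unfolding S1_def by auto
    ultimately show ?thesis using finish[of c s0 V3 E3 s3] by (metis numeral_2_eq_2 mult_2 add_2_eq_Suc' numeral_Bit0 numeral_eq_Suc)
  next
    case False
    define j where "j = nat (int (card X) - y)"
    have j1: "j \<noteq> 0" "int j = int (card X) - y" using y unfolding j_def by auto
    obtain V3 E3 s3 where e3: "ext V1 E1 s1 V3 E3 s3 c (- int j) (if j = 0 then {} else {1}) 2"
      using ugadgets[OF t1 c1] by blast
    have "ext {c} {} s0 V3 E3 s3 c (int (card X) + - int j) (S1 \<union> (if j = 0 then {} else {1})) 2"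
      using ext_trans[OF c0 e1 e3] .
    moreover have "int (card X) + - int j = y" using j1 by simp
    moreover have "insert y (S1 \<union> (if j = 0 then {} else {1})) = {1, y} \<union> X \<union> (if z then {0} else {})"
      using j1 False unfolding S1_def by auto
    ultimately show ?thesis using finish[of c s0 V3 E3 s3] by (metis numeral_2_eq_2 mult_2 add_2_eq_Suc' numeral_Bit0 numeral_eq_Suc)
  qed
qed

lemma constr3:
  assumes fX: "finite X" and X: "\<forall>x\<in>X. x > 1" and fY: "finite Y" and Y: "\<forall>y\<in>Y. y < -1" and cY: "card Y \<ge> 3"
  shows "\<exists>V E s. tree V E \<and> sdeg E s ` V = {1} \<union> Y \<union> X \<union> (if z then {0} else {}) \<and> tree_diam V E \<le> 6"
proof -
  define c :: nat where "c = 0"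
  define s0 :: "nat set \<Rightarrow> bool" where "s0 = (\<lambda>_. True)"
  have t0: "tree {c} {}" by (rule single_tree)
  have c0: "c \<in> {c}" by simp
  have Yne: "Y \<noteq> {}" using cY by auto
  define SY where "SY = Y \<union> (if Y = {} then {} else {1})"
  obtain V1 E1 s1 where e1: "ext {c} {} s0 V1 E1 s1 c (int (card Y)) SY 3"
    using ygadgets[OF fY Y t0 c0] unfolding SY_def by blast
  have t1: "tree V1 E1" and c1: "c \<in> V1" using ext_tree[OF e1] ext_sub[OF e1] by auto
  define S1 where "S1 = X \<union> (if X = {} then {} else {1})"
  obtain V2 E2 s2 where e2': "ext V1 E1 s1 V2 E2 s2 c (int (card X)) S1 2"
    using xgadgets[OF fX X t1 c1] unfolding S1_def by blast
  have e2: "ext V1 E1 s1 V2 E2 s2 c (int (card X)) S1 3" using ext_monok[OF e2'] by simp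
  have t2: "tree V2 E2" and c2: "c \<in> V2" using ext_tree[OF e2] ext_sub[OF e2] c1 by auto
  have e12: "ext {c} {} s0 V2 E2 s2 c (int (card Y) + int (card X)) (SY \<union> S1) 3"
    using ext_trans[OF c0 e1 e2] .
  show ?thesis
  proof (cases z)
    case True
    obtain V3 E3 s3 where e3': "ext V2 E2 s2 V3 E3 s3 c (-1) {0, 1} 2" using zgadget[OF t2 c2] by blast
    have e3: "ext V2 E2 s2 V3 E3 s3 c (-1) {0, 1} 3" using ext_monok[OF e3'] by simp
    have t3: "tree V3 E3" and c3: "c \<in> V3" using ext_tree[OF e3] ext_sub[OF e3] c2 by auto
    define j where "j = card Y + card X - 2"
    have j1: "j \<noteq> 0" "int j = int (card Y) + int (card X) - 2" using cY unfolding j_def by auto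
    obtain V4 E4 s4 where e4': "ext V3 E3 s3 V4 E4 s4 c (- int j) (if j = 0 then {} else {1}) 2"
      using ugadgets[OF t3 c3] by blast
    have e4: "ext V3 E3 s3 V4 E4 s4 c (- int j) (if j = 0 then {} else {1}) 3" using ext_monok[OF e4'] by simp
    have "ext {c} {} s0 V4 E4 s4 c (int (card Y) + int (card X) + -1 + - int j) (SY \<union> S1 \<union> {0, 1} \<union> (if j = 0 then {} else {1})) 3"
      using ext_trans[OF c0 ext_trans[OF c0 e12 e3] e4] .
    then have F: "tree V4 E4 \<and> sdeg E4 s4 ` V4 = insert (int (card Y) + int (card X) + -1 + - int j) (SY \<union> S1 \<union> {0, 1} \<union> (if j = 0 then {} else {1})) \<and> tree_diam V4 E4 \<le> 2 * 3"
      by (rule finish)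
    have d: "int (card Y) + int (card X) + -1 + - int j = 1" using j1 by simp
    have ss: "insert 1 (SY \<union> S1 \<union> {0, 1} \<union> (if j = 0 then {} else {1})) = {1} \<union> Y \<union> X \<union> (if z then {0} else {})"
      using j1 True unfolding S1_def SY_def by auto
    have G: "sdeg E4 s4 ` V4 = {1} \<union> Y \<union> X \<union> (if z then {0} else {})"
      unfolding conjunct1[OF conjunct2[OF F]] d by (rule ss)
    have "tree_diam V4 E4 \<le> 6" using conjunct2[OF conjunct2[OF F]] by simp
    then show ?thesis using G conjunct1[OF F] by blast
  next
    case False
    define j where "j = card Y + card X - 1"
    have j1: "j \<noteq> 0" "int j = int (card Y) + int (card X) - 1" using cY unfolding j_def by auto
    obtain V4 E4 s4 where e4': "ext V2 E2 s2 V4 E4 s4 c (- int j) (if j = 0 then {} else {1}) 2"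
      using ugadgets[OF t2 c2] by blast
    have e4: "ext V2 E2 s2 V4 E4 s4 c (- int j) (if j = 0 then {} else {1}) 3" using ext_monok[OF e4'] by simp
    have "ext {c} {} s0 V4 E4 s4 c (int (card Y) + int (card X) + - int j) (SY \<union> S1 \<union> (if j = 0 then {} else {1})) 3"
      using ext_trans[OF c0 e12 e4] .
    then have F: "tree V4 E4 \<and> sdeg E4 s4 ` V4 = insert (int (card Y) + int (card X) + - int j) (SY \<union> S1 \<union> (if j = 0 then {} else {1})) \<and> tree_diam V4 E4 \<le> 2 * 3"
      by (rule finish)
    have d: "int (card Y) + int (card X) + - int j = 1" using j1 by simp
    have ss: "insert 1 (SY \<union> S1 \<union> (if j = 0 then {} else {1})) = {1} \<union> Y \<union> X \<union> (if z then {0} else {})"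
      using j1 False unfolding S1_def SY_def by auto
    have G: "sdeg E4 s4 ` V4 = {1} \<union> Y \<union> X \<union> (if z then {0} else {})"
      unfolding conjunct1[OF conjunct2[OF F]] d by (rule ss)
    have "tree_diam V4 E4 \<le> 6" using conjunct2[OF conjunct2[OF F]] by simp
    then show ?thesis using G conjunct1[OF F] by blast
  qed
qed

lemma constr2:
  assumes fX: "finite X" and X: "\<forall>x\<in>X. x > 1" and y1: "y1 < -1" and y2: "y2 < -1"
  shows "\<exists>V E s. tree V E \<and> sdeg E s ` V = {1, y1, y2} \<union> X \<union> (if z then {0} else {}) \<and> tree_diam V E \<le> 5"
proof -
  define c :: nat where "c = 0"
  define d :: nat where "d = 1"
  define s0 :: "nat set \<Rightarrow> bool" where "s0 = (\<lambda>_. True)"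
  have t0: "tree {c} {}" by (rule single_tree)
  have c0: "c \<in> {c}" by simp
  have dc: "d \<notin> {c}" unfolding c_def d_def by simp
  have cd: "c \<noteq> d" unfolding c_def d_def by simp
  have e1: "ext {c} {} s0 (insert d {c}) (insert {c,d} {}) (s0({c,d} := True)) c 1 {1} 1"
    using add_leaf_ext[OF t0 c0 dc, of s0 True] by simp
  define V1 where "V1 = insert d {c}"
  define E1 where "E1 = insert {c,d} ({}::nat set set)"
  define s1 where "s1 = s0({c,d} := True)"
  have e1': "ext {c} {} s0 V1 E1 s1 c 1 {1} 1" using e1 unfolding V1_def E1_def s1_def .
  have t1: "tree V1 E1" using ext_tree[OF e1'] .
  have c1: "c \<in> V1" and d1: "d \<in> V1" unfolding V1_def by auto
  have "sdeg {} s0 c = 0" by (rule sdeg_none) simp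
  then have sc1: "sdeg E1 s1 c = 1" using e1' unfolding ext_def by simp
  have "sdeg E1 s1 ` (V1 - {c}) = {1}" using e1' unfolding ext_def by blast
  moreover have "V1 - {c} = {d}" unfolding V1_def using cd by auto
  ultimately have sd1: "sdeg E1 s1 d = 1" by simp
  define S1 where "S1 = X \<union> (if X = {} then {} else {1})"
  obtain V2a E2a s2a where ea: "ext V1 E1 s1 V2a E2a s2a c (int (card X)) S1 2"
    using xgadgets[OF fX X t1 c1] unfolding S1_def by blast
  have t2a: "tree V2a E2a" and c2a: "c \<in> V2a" using ext_tree[OF ea] ext_sub[OF ea] c1 by auto
  define j1 where "j1 = nat (1 + int (card X) - y1)"
  have j1: "j1 \<noteq> 0" "int j1 = 1 + int (card X) - y1" using y1 unfolding j1_def by auto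
  obtain V2 E2 s2 where eb: "ext V2a E2a s2a V2 E2 s2 c (- int j1) (if j1 = 0 then {} else {1}) 2"
    using ugadgets[OF t2a c2a] by blast
  have e2: "ext V1 E1 s1 V2 E2 s2 c (int (card X) + - int j1) (S1 \<union> (if j1 = 0 then {} else {1})) 2"
    using ext_trans[OF c1 ea eb] .
  from e2 have t2: "tree V2 E2" and V12: "V1 \<subseteq> V2" and E12: "E1 \<subseteq> E2"
    and b2: "\<forall>u\<in>V1-{c}. sdeg E2 s2 u = sdeg E1 s1 u"
    and c2: "sdeg E2 s2 c = sdeg E1 s1 c + (int (card X) + - int j1)"
    and im2: "sdeg E2 s2 ` (V2 - V1) = S1 \<union> (if j1 = 0 then {} else {1})"
    and n2: "\<forall>u\<in>V2-V1. near E2 c 2 u"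
    unfolding ext_def by blast+
  have sc2: "sdeg E2 s2 c = y1" using c2 sc1 j1 by simp
  have "d \<in> V1 - {c}" using d1 cd by blast
  then have sd2: "sdeg E2 s2 d = 1" using b2 sd1 by simp
  have d2: "d \<in> V2" using V12 d1 by blast
  obtain V3 E3 s3 \<delta> S2 where e3: "ext V2 E2 s2 V3 E3 s3 d \<delta> S2 2" and dl: "1 + \<delta> = y2"
    and S2: "S2 = {1} \<union> (if z then {0} else {})"
  proof (cases z)
    case True
    obtain V3a E3a s3a where e3a: "ext V2 E2 s2 V3a E3a s3a d (-1) {0, 1} 2" using zgadget[OF t2 d2] by blast
    have t3a: "tree V3a E3a" and d3a: "d \<in> V3a" using ext_tree[OF e3a] ext_sub[OF e3a] d2 by auto
    define j where "j = nat (- y2)"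
    have j: "j \<noteq> 0" "int j = - y2" using y2 unfolding j_def by auto
    obtain V3 E3 s3 where e3b: "ext V3a E3a s3a V3 E3 s3 d (- int j) (if j = 0 then {} else {1}) 2"
      using ugadgets[OF t3a d3a] by blast
    have X: "ext V2 E2 s2 V3 E3 s3 d (-1 + - int j) ({0, 1} \<union> (if j = 0 then {} else {1})) 2"
      using ext_trans[OF d2 e3a e3b] .
    have "1 + (-1 + - int j) = y2" using j by simp
    moreover have "{0, 1} \<union> (if j = 0 then {} else {1}) = {1} \<union> (if z then {0} else {})" using j True by auto
    ultimately show ?thesis by (rule that[OF X])
  next
    case False
    define j where "j = nat (1 - y2)"
    have j: "j \<noteq> 0" "int j = 1 - y2" using y2 unfolding j_def by auto
    obtain V3 E3 s3 where e3b: "ext V2 E2 s2 V3 E3 s3 d (- int j) (if j = 0 then {} else {1}) 2"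
      using ugadgets[OF t2 d2] by blast
    have "1 + (- int j) = y2" using j by simp
    moreover have "(if j = 0 then {} else {1}) = {1} \<union> (if z then {0} else {})" using j False by auto
    ultimately show ?thesis by (rule that[OF e3b])
  qed
  from e3 have t3: "tree V3 E3" and V23: "V2 \<subseteq> V3" and E23: "E2 \<subseteq> E3"
    and b3: "\<forall>u\<in>V2-{d}. sdeg E3 s3 u = sdeg E2 s2 u"
    and c3: "sdeg E3 s3 d = sdeg E2 s2 d + \<delta>"
    and im3: "sdeg E3 s3 ` (V3 - V2) = S2"
    and n3: "\<forall>u\<in>V3-V2. near E3 d 2 u"
    unfolding ext_def by blast+
  have "c \<in> V2 - {d}" using V12 c1 cd by blast
  then have "sdeg E3 s3 c = sdeg E2 s2 c" using b3 by blast
  then have sc3: "sdeg E3 s3 c = y1" using sc2 by simp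
  have sd3: "sdeg E3 s3 d = y2" using c3 sd2 dl by simp
  have "sdeg E3 s3 ` (V2 - V1) = sdeg E2 s2 ` (V2 - V1)"
  proof (rule image_cong)
    fix u assume "u \<in> V2 - V1"
    then have "u \<in> V2 - {d}" using d1 by auto
    then show "sdeg E3 s3 u = sdeg E2 s2 u" using b3 by blast
  qed simp
  then have im2': "sdeg E3 s3 ` (V2 - V1) = S1 \<union> {1}" using im2 j1 by simp
  have VV: "V3 = {c, d} \<union> (V2 - V1) \<union> (V3 - V2)" using V12 V23 c1 d1 unfolding V1_def by auto
  have "sdeg E3 s3 ` V3 = {sdeg E3 s3 c, sdeg E3 s3 d} \<union> sdeg E3 s3 ` (V2 - V1) \<union> sdeg E3 s3 ` (V3 - V2)"
    by (subst VV) (simp add: image_Un)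
  also have "\<dots> = {1, y1, y2} \<union> X \<union> (if z then {0} else {})"
    unfolding sc3 sd3 im2' im3 S2 S1_def by auto
  finally have I: "sdeg E3 s3 ` V3 = {1, y1, y2} \<union> X \<union> (if z then {0} else {})" .
  have ecd: "{c, d} \<in> E3" using E12 E23 unfolding E1_def by blast
  have N: "\<forall>u\<in>V3. near E3 c 2 u \<or> near E3 d 2 u"
  proof
    fix u assume u: "u \<in> V3"
    show "near E3 c 2 u \<or> near E3 d 2 u"
    proof (cases "u \<in> V3 - V2")
      case True then show ?thesis using n3 by blast
    next
      case False
      show ?thesis
      proof (cases "u \<in> V2 - V1")
        case True then show ?thesis using n2 near_monoE[OF _ E23] by blast
      next
        case f2: False
        then have "u = c \<or> u = d" using u False VV by auto
        moreover have "near E3 c 2 c" using near_monor[OF near_refl] by blast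
        moreover have "near E3 d 2 d" using near_monor[OF near_refl] by blast
        ultimately show ?thesis by blast
      qed
    qed
  qed
  have "tree_diam V3 E3 \<le> 2 * 2 + 1" using diam_bicenter[OF t3 ecd N] .
  then show ?thesis using t3 I by (intro exI[of _ V3] exI[of _ E3] exI[of _ s3]) simp
qed



lemma dpath:
  assumes t: "tree V E" and a: "a \<in> V" and b: "b \<in> V"
  shows "\<exists>P. distinct P \<and> wk E P \<and> hd P = a \<and> last P = b"
proof -
  have "connected_graph V E" using t tree_def by blast
  then obtain p where "wk E p" "hd p = a" "last p = b"
    using a b unfolding connected_graph_def walk_wk by blast
  then show ?thesis using wk_distinct_sub by metis
qed

lemma lb1: "tree V E \<Longrightarrow> NL E v \<Longrightarrow> 4 \<le> tree_diam V E"
  using lb_main[of V E v v "[v]"] by simp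

lemma lb2:
  assumes t: "tree V E" and v: "v1 \<in> V" "v2 \<in> V" "v1 \<noteq> v2" and n: "NL E v1" "NL E v2"
  shows "5 \<le> tree_diam V E"
proof -
  obtain P where P: "distinct P" "wk E P" "hd P = v1" "last P = v2" using dpath[OF t v(1,2)] by blast
  have "length P \<noteq> 0" using P by auto
  moreover have "length P \<noteq> 1" using P v(3) by (cases P) auto
  ultimately have "length P \<ge> 2" by linarith
  then show ?thesis using lb_main[OF t n P] by simp
qed

lemma lb3:
  assumes t: "tree V E" and v: "v1 \<in> V" "v2 \<in> V" "v3 \<in> V" "v1 \<noteq> v2" "v2 \<noteq> v3" "v1 \<noteq> v3"
    and n: "NL E v1" "NL E v2" "NL E v3"
  shows "6 \<le> tree_diam V E"
proof -
  have ac: "acyclic_graph E" using t tree_def by blast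
  have "\<not> ({v1,v2} \<in> E \<and> {v2,v3} \<in> E \<and> {v3,v1} \<in> E)"
  proof
    assume e: "{v1,v2} \<in> E \<and> {v2,v3} \<in> E \<and> {v3,v1} \<in> E"
    have w: "wk E [v1,v2,v3]" using e by simp
    have d: "distinct [v1,v2,v3]" using v by simp
    have c: "{last [v1,v2,v3], hd [v1,v2,v3]} \<in> E" using e by simp
    have l: "3 \<le> length [v1,v2,v3]" by simp
    show False using acyc_wk[OF ac l d w c] .
  qed
  then obtain a b where ab: "a \<in> V" "b \<in> V" "a \<noteq> b" "{a,b} \<notin> E" "NL E a" "NL E b"
    using v n by blast
  obtain P where P: "distinct P" "wk E P" "hd P = a" "last P = b" using dpath[OF t ab(1,2)] by blast
  have "length P \<noteq> 0" using P by auto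
  moreover have "length P \<noteq> 1" using P ab(3) by (cases P) auto
  moreover have "length P \<noteq> 2"
  proof
    assume "length P = 2"
    then obtain x y where "P = [x,y]" by (metis (no_types) One_nat_def Suc_1 length_0_conv length_Suc_conv)
    then show False using P ab(4) by simp
  qed
  ultimately have "length P \<ge> 3" by linarith
  then show ?thesis using lb_main[OF t ab(5,6) P] by simp
qed

lemma three_elems:
  assumes "finite Y" "card Y \<ge> 3"
  shows "\<exists>y1 y2 y3. y1 \<in> Y \<and> y2 \<in> Y \<and> y3 \<in> Y \<and> y1 \<noteq> y2 \<and> y2 \<noteq> y3 \<and> y1 \<noteq> y3"
proof -
  have "Y \<noteq> {}" using assms by auto
  then obtain y1 where y1: "y1 \<in> Y" by blast
  have c1: "card (Y - {y1}) \<ge> 2" using assms y1 by simp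
  have "Y - {y1} \<noteq> {}"
  proof
    assume h: "Y - {y1} = {}"
    have "card (Y - {y1}) = 0" unfolding h by simp
    then show False using c1 by simp
  qed
  then obtain y2 where y2: "y2 \<in> Y - {y1}" by blast
  have c2: "card (Y - {y1} - {y2}) \<ge> 1" using c1 y2 assms by simp
  have "Y - {y1} - {y2} \<noteq> {}"
  proof
    assume h: "Y - {y1} - {y2} = {}"
    have "card (Y - {y1} - {y2}) = 0" unfolding h by simp
    then show False using c2 by simp
  qed
  then obtain y3 where y3: "y3 \<in> Y - {y1} - {y2}" by blast
  show ?thesis using y1 y2 y3 by blast
qed

lemma lower:
  assumes t: "tree V E" and r: "realizes V E s D0" and m1: "-1 \<notin> D0" and YD: "Y \<subseteq> D0"
    and Y: "\<forall>y\<in>Y. y < -1" and fY: "finite Y" and cY: "card Y = m" and m: "m \<ge> 1"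
  shows "(if m = 1 then 4 else if m = 2 then 5 else 6) \<le> tree_diam V E"
proof -
  have D0: "D0 = sdeg E s ` V" using r realizes_def by blast
  have NLY: "\<exists>v\<in>V. sdeg E s v = y \<and> NL E v" if yY: "y \<in> Y" for y
  proof -
    have "y \<in> sdeg E s ` V" using yY YD D0 by blast
    then obtain v where v: "v \<in> V" "sdeg E s v = y" by blast
    have "sdeg E s v \<le> -2" using v Y yY by force
    moreover have "-1 \<notin> sdeg E s ` V" using m1 D0 by simp
    ultimately show ?thesis using NL_of[OF t _ v(1)] v by blast
  qed
  show ?thesis
  proof (cases "m = 1")
    case True
    have "Y \<noteq> {}" using cY True by auto
    then obtain y where "y \<in> Y" by blast
    then obtain v where "NL E v" using NLY by blast
    then show ?thesis using lb1[OF t] True by simp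
  next
    case m1': False
    show ?thesis
    proof (cases "m = 2")
      case True
      have "card Y = 2" using cY True by simp
      then obtain y1 y2 where "Y = {y1,y2}" "y1 \<noteq> y2" by (auto simp: card_2_iff)
      then obtain v1 v2 where "v1 \<in> V" "v2 \<in> V" "sdeg E s v1 = y1" "sdeg E s v2 = y2" "NL E v1" "NL E v2"
        using NLY by blast
      moreover have "v1 \<noteq> v2" using calculation \<open>y1 \<noteq> y2\<close> by auto
      ultimately have "5 \<le> tree_diam V E" using lb2[OF t] by blast
      then show ?thesis using True by simp
    next
      case False
      then have "card Y \<ge> 3" using m m1' cY by linarith
      then obtain y1 y2 y3 where ys: "y1 \<in> Y" "y2 \<in> Y" "y3 \<in> Y" "y1 \<noteq> y2" "y2 \<noteq> y3" "y1 \<noteq> y3"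
        using three_elems[OF fY] by blast
      obtain v1 where v1: "v1 \<in> V" "sdeg E s v1 = y1" "NL E v1" using NLY ys by blast
      obtain v2 where v2: "v2 \<in> V" "sdeg E s v2 = y2" "NL E v2" using NLY ys by blast
      obtain v3 where v3: "v3 \<in> V" "sdeg E s v3 = y3" "NL E v3" using NLY ys by blast
      have "v1 \<noteq> v2" "v2 \<noteq> v3" "v1 \<noteq> v3" using v1 v2 v3 ys by auto
      then have "6 \<le> tree_diam V E" using lb3[OF t v1(1) v2(1) v3(1)] v1 v2 v3 by blast
      then show ?thesis using False m1' by simp
    qed
  qed
qed

lemma diamD_eq:
  assumes ex: "\<exists>V E s. tree V E \<and> realizes V E s D \<and> tree_diam V E \<le> d"
    and lb: "\<And>V E s. tree V E \<Longrightarrow> realizes V E s D \<Longrightarrow> d \<le> tree_diam V E"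
  shows "diamD D = d"
  unfolding diamD_def
proof (rule Least_equality)
  obtain V E s where "tree V E" "realizes V E s D" "tree_diam V E \<le> d" using ex by blast
  moreover have "d \<le> tree_diam V E" using lb calculation by blast
  ultimately show "\<exists>V E s. tree V E \<and> realizes V E s D \<and> tree_diam V E = d" by (metis le_antisym)
next
  fix y assume "\<exists>V E s. tree V E \<and> realizes V E s D \<and> tree_diam V E = y"
  then show "d \<le> y" using lb by blast
qed



lemma upper:
  assumes m: "m \<ge> 1" and fY: "finite Y" and cY: "card Y = m" and Y: "\<forall>y\<in>Y. y < -1"
    and fX: "finite X" and X: "\<forall>x\<in>X. x > 1"
  shows "\<exists>V E s. tree V E \<and> sdeg E s ` V = {1} \<union> Y \<union> X \<union> (if z then {0} else {})
           \<and> tree_diam V E \<le> (if m = 1 then 4 else if m = 2 then 5 else 6)"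
proof (cases "m = 1")
  case True
  have "card Y = 1" using cY True by simp
  then obtain y where Yy: "Y = {y}" by (auto simp: card_1_singleton_iff)
  then have y: "y < -1" using Y by simp
  have eq: "{1, y} \<union> X \<union> (if z then {0} else {}) = {1} \<union> Y \<union> X \<union> (if z then {0} else {})" using Yy by auto
  obtain V E s where h: "tree V E" "sdeg E s ` V = {1, y} \<union> X \<union> (if z then {0} else {})" "tree_diam V E \<le> 4"
    using constr1[OF fX X y, of z] by blast
  have "tree_diam V E \<le> (if m = 1 then 4 else if m = 2 then 5 else 6)" using h(3) True by simp
  then show ?thesis using h(1) h(2)[unfolded eq] by blast
next
  case m1: False
  show ?thesis
  proof (cases "m = 2")
    case True
    have "card Y = 2" using cY True by simp
    then obtain y1 y2 where Yy: "Y = {y1,y2}" by (auto simp: card_2_iff)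
    then have y: "y1 < -1" "y2 < -1" using Y by auto
    have eq: "{1, y1, y2} \<union> X \<union> (if z then {0} else {}) = {1} \<union> Y \<union> X \<union> (if z then {0} else {})" using Yy by auto
    obtain V E s where h: "tree V E" "sdeg E s ` V = {1, y1, y2} \<union> X \<union> (if z then {0} else {})" "tree_diam V E \<le> 5"
      using constr2[OF fX X y, of z] by blast
    have "tree_diam V E \<le> (if m = 1 then 4 else if m = 2 then 5 else 6)" using h(3) True by simp
    then show ?thesis using h(1) h(2)[unfolded eq] by blast
  next
    case False
    then have "card Y \<ge> 3" using m m1 cY by linarith
    then obtain V E s where h: "tree V E" "sdeg E s ` V = {1} \<union> Y \<union> X \<union> (if z then {0} else {})" "tree_diam V E \<le> 6"
      using constr3[OF fX X fY Y, of z] by blast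
    have "tree_diam V E \<le> (if m = 1 then 4 else if m = 2 then 5 else 6)" using h(3) False m1 by simp
    then show ?thesis using h(1) h(2) by blast
  qed
qed

theorem mainTheorem6:
  fixes Y X :: "int set" and m n :: nat
  assumes "m \<ge> 1"
    and "finite Y" and "card Y = m" and "\<forall>y\<in>Y. y < -1"
    and "finite X" and "card X = n" and "\<forall>x\<in>X. x > 1"
    and "D = {1} \<union> Y \<union> X"
  shows "diamD D = diamD (insert 0 D)
         \<and> (m = 1 \<longrightarrow> diamD D = 4)
         \<and> (m = 2 \<longrightarrow> diamD D = 5)
         \<and> (m > 2 \<longrightarrow> diamD D = 6)"
proof -
  define d :: nat where "d = (if m = 1 then 4 else if m = 2 then 5 else 6)"
  have a1: "-1 \<notin> Y" using assms(4) by force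
  have a2: "-1 \<notin> X" using assms(7) by force
  have m1D: "-1 \<notin> D" unfolding assms(8) using a1 a2 by simp
  have m1D0: "-1 \<notin> insert 0 D" using m1D by simp
  have YD: "Y \<subseteq> D" using assms(8) by blast
  have YD0: "Y \<subseteq> insert 0 D" using YD by blast
  have "diamD D = d"
  proof (rule diamD_eq)
    obtain V E s where h: "tree V E" "sdeg E s ` V = {1} \<union> Y \<union> X \<union> (if False then {0} else {})" "tree_diam V E \<le> d"
      using upper[OF assms(1,2,3,4,5,7), of False] unfolding d_def by blast
    have "realizes V E s D" unfolding realizes_def h(2) assms(8) by auto
    then show "\<exists>V E s. tree V E \<and> realizes V E s D \<and> tree_diam V E \<le> d"
      using h by blast
  next
    fix V E s assume h: "tree V E" "realizes V E s D"
    show "d \<le> tree_diam V E" unfolding d_def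
      using lower[OF h m1D YD assms(4,2,3,1)] .
  qed
  moreover have "diamD (insert 0 D) = d"
  proof (rule diamD_eq)
    obtain V E s where h: "tree V E" "sdeg E s ` V = {1} \<union> Y \<union> X \<union> (if True then {0} else {})" "tree_diam V E \<le> d"
      using upper[OF assms(1,2,3,4,5,7), of True] unfolding d_def by blast
    have "realizes V E s (insert 0 D)" unfolding realizes_def h(2) assms(8) by auto
    then show "\<exists>V E s. tree V E \<and> realizes V E s (insert 0 D) \<and> tree_diam V E \<le> d"
      using h by blast
  next
    fix V E s assume h: "tree V E" "realizes V E s (insert 0 D)"
    show "d \<le> tree_diam V E" unfolding d_def
      using lower[OF h m1D0 YD0 assms(4,2,3,1)] .
  qed
  ultimately show ?thesis unfolding d_def by simp
qed


end
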